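(* Let $J=(a,b)\subseteq\mathbb R$ be an open interval (possibly unbounded) and let $A:J\to\mathbb R$ be differentiable with $|A'(x)-A'(y)|\le M|x-y|$ for all $x,y\in J$, for some constant $M>0$. Then $\bigl|\mathtt S[\mathrm{Im}K_\Gamma](\mathbf z)\bigr|\le\left(8+\frac32\right)M^2$ for every three-tuple $\mathbf z$ of distinct points on $\Gamma=\{x+iA(x):x\in J\}$.
   Context: $s(x)=\sqrt{1+(A'(x))^2}$. The kernel (normalizing factor $1/(2\pi)$ omitted) is $K_\Gamma(w,z)=\dfrac{A'(x)-i}{s(x)\,[\,x-y+i(A(x)-A(y))\,]}$ for $w=x+iA(x)$, $z=y+iA(y)$, $x\neq y$; $\mathrm{Im}K_\Gamma$ is its imaginary part. For a real-valued $K$ and distinct $z_1,z_2,z_3$, $\mathtt S[K](\mathbf z)=\sum_{\sigma\in S_3}K(z_{\sigma(1)},z_{\sigma(2)})K(z_{\sigma(1)},z_{\sigma(3)})$, $S_3$ the permutation group on three elements. *)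

theory Defs
  imports "HOL-Analysis.Analysis" "HOL-Combinatorics.Permutations"
begin

definition graph_curve :: "(real \<Rightarrow> real) \<Rightarrow> real set \<Rightarrow> complex set" where
  "graph_curve A J = {Complex x (A x) | x. x \<in> J}"

definition sfun :: "(real \<Rightarrow> real) \<Rightarrow> real \<Rightarrow> real" where
  "sfun A x = sqrt (1 + (deriv A x)\<^sup>2)"

text \<open>Kernel K_Gamma(w,z) for w = x + i A(x), z = y + i A(y) (so x = Re w, y = Re z),
  normalizing factor 1/(2 pi) omitted.\<close>
definition KGamma :: "(real \<Rightarrow> real) \<Rightarrow> complex \<Rightarrow> complex \<Rightarrow> complex" where
  "KGamma A w z =
     (let x = Re w; y = Re z in
       (complex_of_real (deriv A x) - \<i>) /
       (complex_of_real (sfun A x) *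
        (complex_of_real (x - y) + \<i> * complex_of_real (A x - A y))))"

definition Ssym :: "(complex \<Rightarrow> complex \<Rightarrow> real) \<Rightarrow> (nat \<Rightarrow> complex) \<Rightarrow> real" where
  "Ssym K z = (\<Sum>\<sigma> \<in> {\<sigma>. \<sigma> permutes {1,2,3::nat}}.
       K (z (\<sigma> 1)) (z (\<sigma> 2)) * K (z (\<sigma> 1)) (z (\<sigma> 3)))"

end

theory Submission
  imports Defs
begin


definition cc :: "real \<Rightarrow> real" where "cc p = (1 - p^2)/(1+p^2)"
definition dd :: "real \<Rightarrow> real" where "dd p = 2*p/(1+p^2)"
definition gg :: "real \<Rightarrow> real \<Rightarrow> real \<Rightarrow> real" where
  "gg p m q = (cc p * (1 - m*q) + dd p * (m+q)) / ((1+m^2)*(1+q^2))"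
definition EE :: "real \<Rightarrow> real \<Rightarrow> real" where
  "EE m q = (1 + m*q)/((1+m^2)*(1+q^2))"
definition GG :: "real \<Rightarrow> real \<Rightarrow> real \<Rightarrow> real" where
  "GG p m q = (1+p*m)*(1+p*q)/((1+p^2)*(1+m^2)*(1+q^2))"

lemma pos1: "(1::real) + x^2 > 0" by (simp add: add_pos_nonneg)
lemma nz1: "(1::real) + x^2 \<noteq> 0" using pos1[of x] by linarith

lemma GG_split: "GG p m q = EE m q / 2 + gg p m q / 2"
  unfolding GG_def EE_def gg_def cc_def dd_def
  using nz1[of p] nz1[of m] nz1[of q]
  apply (simp add: divide_simps) by algebra

lemma gg_diff: "gg a m q - gg b m q =
  -2*(a-b)*((1+a*m)*(b-q) + (a-m)*(1+b*q))/((1+a^2)*(1+b^2)*(1+m^2)*(1+q^2))"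
  unfolding gg_def cc_def dd_def
  using nz1[of a] nz1[of b] nz1[of m] nz1[of q]
  apply (simp add: divide_simps) by algebra

lemma gg_zero:
  assumes h1: "h1 > 0" and h2: "h2 > 0" and q: "(h1+h2)*q = h1*m + h2*n"
  shows "gg p m q/(h1*(h1+h2)) - gg p m n/(h1*h2) + gg p q n/((h1+h2)*h2) = 0"
proof -
  have H: "h1 + h2 > 0" using h1 h2 by simp
  show ?thesis
  unfolding gg_def cc_def dd_def
  using nz1[of p] nz1[of m] nz1[of q] nz1[of n] h1 h2 H
  apply (simp add: divide_simps)
  using q by algebra
qed

lemma EE_id:
  assumes h1: "h1 > 0" and h2: "h2 > 0" and q: "(h1+h2)*q = h1*m + h2*n"
  shows "EE m q/(h1*(h1+h2)) - EE m n/(h1*h2) + EE q n/((h1+h2)*h2)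
     = 2*(n-m)^2/((h1+h2)^2*(1+m^2)*(1+q^2)*(1+n^2))"
proof -
  have H: "h1 + h2 > 0" using h1 h2 by simp
  show ?thesis
  unfolding EE_def
  using nz1[of m] nz1[of q] nz1[of n] h1 h2 H
  apply (simp add: divide_simps)
  using q by algebra
qed
lemma abs_le_sq1: assumes "X = t^2 + e" "e \<ge> 0" "X \<ge> 1" shows "\<bar>t\<bar> \<le> (X::real)"
proof (cases "\<bar>t\<bar> \<le> 1")
  case True then show ?thesis using assms by linarith
next
  case False
  then have "\<bar>t\<bar> \<le> \<bar>t\<bar>*\<bar>t\<bar>" using mult_left_mono[of 1 "\<bar>t\<bar>" "\<bar>t\<bar>"] by simp
  also have "\<dots> = t^2" by (simp add: power2_eq_square abs_mult_self_eq)
  finally show ?thesis using assms by linarith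
qed

lemma one_pm: "\<bar>1 + a*m\<bar> \<le> (1+a^2)*(1+m^2::real)"
proof (rule abs_le_sq1)
  show "(1+a^2)*(1+m^2) = (1+a*m)^2 + (a-m)^2" by algebra
  show "(1+a^2)*(1+m^2) \<ge> (1::real)"
    using mult_mono[of 1 "1+a^2" 1 "1+m^2"] by simp
qed simp

lemma gg_diff_bound: "\<bar>gg a m q - gg b m q\<bar> \<le> 2*\<bar>a-b\<bar>*(\<bar>b-q\<bar> + \<bar>a-m\<bar>)"
proof -
  define D where "D = (1+a^2)*(1+b^2)*(1+m^2)*(1+q^2)"
  have Da: "(1+a^2)*(1+m^2) \<ge> (1::real)" "(1+b^2)*(1+q^2) \<ge> (1::real)"
    using mult_mono[of 1 "1+a^2" 1 "1+m^2"] mult_mono[of 1 "1+b^2" 1 "1+q^2"] by simp_all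
  have DD: "D = ((1+a^2)*(1+m^2))*((1+b^2)*(1+q^2))" by (simp add: D_def ac_simps)
  have Dp: "D > 0" unfolding D_def using pos1[of a] pos1[of b] pos1[of m] pos1[of q] by simp
  have "\<bar>(1+a*m)*(b-q) + (a-m)*(1+b*q)\<bar> \<le> \<bar>1+a*m\<bar>*\<bar>b-q\<bar> + \<bar>a-m\<bar>*\<bar>1+b*q\<bar>"
    by (metis abs_mult abs_triangle_ineq)
  also have "\<dots> \<le> ((1+a^2)*(1+m^2))*\<bar>b-q\<bar> + \<bar>a-m\<bar>*((1+b^2)*(1+q^2))"
    by (intro add_mono mult_mono one_pm) auto
  also have "\<dots> \<le> D*\<bar>b-q\<bar> + \<bar>a-m\<bar>*D"
  proof (intro add_mono mult_mono)
    show "(1+a^2)*(1+m^2) \<le> D" unfolding DD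
      using mult_left_mono[OF Da(2), of "(1+a^2)*(1+m^2)"] Da(1) by simp
    show "(1+b^2)*(1+q^2) \<le> D" unfolding DD
      using mult_right_mono[OF Da(1), of "(1+b^2)*(1+q^2)"] Da(2) by simp
  qed (use Dp in auto)
  finally have N: "\<bar>(1+a*m)*(b-q) + (a-m)*(1+b*q)\<bar> \<le> D*(\<bar>b-q\<bar> + \<bar>a-m\<bar>)"
    by (simp add: algebra_simps)
  have "\<bar>gg a m q - gg b m q\<bar> = 2*\<bar>a-b\<bar>*\<bar>(1+a*m)*(b-q) + (a-m)*(1+b*q)\<bar>/D"
    unfolding gg_diff D_def using pos1[of a] pos1[of b] pos1[of m] pos1[of q]
    by (simp add: abs_mult abs_divide) (rule disjI2, simp split: abs_split)
  also have "\<dots> \<le> 2*\<bar>a-b\<bar>*(D*(\<bar>b-q\<bar> + \<bar>a-m\<bar>))/D"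
    by (intro divide_right_mono mult_left_mono N) (use Dp in auto)
  also have "\<dots> = 2*\<bar>a-b\<bar>*(\<bar>b-q\<bar> + \<bar>a-m\<bar>)" using Dp by simp
  finally show ?thesis .
qed

definition imk :: "real \<Rightarrow> real \<Rightarrow> real \<Rightarrow> real" where
  "imk p U V = - (U + p*V) / (sqrt (1+p^2) * (U^2+V^2))"

lemma imk_prod:
  assumes "U \<noteq> 0" "U' \<noteq> 0"
  shows "imk p U (U*m) * imk p U' (U'*q) = GG p m q / (U*U')"
proof -
  define rr where "rr = sqrt (1+p^2)"
  have ss: "rr * rr = 1+p^2" unfolding rr_def using pos1[of p] by simp
  have s0: "rr \<noteq> 0" using ss nz1[of p] by auto
  show ?thesis unfolding imk_def GG_def rr_def[symmetric]
    using assms nz1[of p] nz1[of m] nz1[of q] s0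
    apply (simp add: divide_simps)
    using ss by algebra
qed

lemma core:
  fixes x1 x2 x3 a1 a2 a3 p1 p2 p3 M :: real
  assumes x12: "x1 < x2" and x23: "x2 < x3" and M0: "M \<ge> 0"
   and e1: "\<bar>p1 - (a2-a1)/(x2-x1)\<bar> + \<bar>p2 - (a2-a1)/(x2-x1)\<bar> \<le> M*(x2-x1)"
   and e2: "\<bar>p2 - (a3-a2)/(x3-x2)\<bar> + \<bar>p3 - (a3-a2)/(x3-x2)\<bar> \<le> M*(x3-x2)"
  shows "\<bar>2*(imk p1 (x1-x2) (a1-a2) * imk p1 (x1-x3) (a1-a3)
           + imk p2 (x2-x1) (a2-a1) * imk p2 (x2-x3) (a2-a3)
           + imk p3 (x3-x1) (a3-a1) * imk p3 (x3-x2) (a3-a2))\<bar> \<le> 6*M^2"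
proof -
  define h1 where "h1 = x2 - x1"
  define h2 where "h2 = x3 - x2"
  define H where "H = h1 + h2"
  define m where "m = (a2-a1)/h1"
  define n where "n = (a3-a2)/h2"
  define q where "q = (a3-a1)/H"
  have h1p: "h1 > 0" and h2p: "h2 > 0" and Hp: "H > 0" using x12 x23 by (auto simp: h1_def h2_def H_def)
  have HH: "x3 - x1 = H" by (simp add: H_def h1_def h2_def)
  have Hq: "H*q = h1*m + h2*n" using h1p h2p Hp by (simp add: q_def m_def n_def H_def field_simps)
  have d12: "a1-a2 = (x1-x2)*m" "a2-a1 = (x2-x1)*m" using h1p by (simp_all add: m_def h1_def field_simps)
  have d23: "a2-a3 = (x2-x3)*n" "a3-a2 = (x3-x2)*n" using h2p by (simp_all add: n_def h2_def field_simps)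
  have d13: "a1-a3 = (x1-x3)*q" "a3-a1 = (x3-x1)*q" using Hp HH by (simp_all add: q_def field_simps)
  have P1: "imk p1 (x1-x2) (a1-a2) * imk p1 (x1-x3) (a1-a3) = GG p1 m q/(h1*H)"
  proof -
    have e: "(x1-x2)*(x1-x3) = h1*H" using HH by (simp add: h1_def algebra_simps)
    show ?thesis unfolding d12 d13 using x12 x23 e by (subst imk_prod) auto
  qed
  have P2: "imk p2 (x2-x1) (a2-a1) * imk p2 (x2-x3) (a2-a3) = - (GG p2 m n/(h1*h2))"
  proof -
    have e: "(x2-x1)*(x2-x3) = - (h1*h2)" by (simp add: h1_def h2_def algebra_simps)
    show ?thesis unfolding d12 d23 using x12 x23 e by (subst imk_prod) auto
  qed
  have P3: "imk p3 (x3-x1) (a3-a1) * imk p3 (x3-x2) (a3-a2) = GG p3 q n/(H*h2)"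
    unfolding d13 d23 using x12 x23 HH by (subst imk_prod) (auto simp: h2_def)
  define F where "F = EE m q/(h1*H) - EE m n/(h1*h2) + EE q n/(H*h2)"
  define T1 where "T1 = (gg p1 m q - gg p2 m q)/(h1*H)"
  define T3 where "T3 = (gg p3 q n - gg p2 q n)/(H*h2)"
  have Z: "gg p2 m q/(h1*H) - gg p2 m n/(h1*h2) + gg p2 q n/(H*h2) = 0"
    using gg_zero[OF h1p h2p, of q m n p2] Hq by (simp add: H_def mult.commute)
  have S: "2*(GG p1 m q/(h1*H) + - (GG p2 m n/(h1*h2)) + GG p3 q n/(H*h2)) = F + T1 + T3"
    unfolding F_def T1_def T3_def GG_split using Z
    by (simp add: add_divide_distrib diff_divide_distrib algebra_simps)
  have mp: "\<bar>p1 - m\<bar> + \<bar>p2 - m\<bar> \<le> M*h1" using e1 by (simp add: m_def h1_def)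
  have np: "\<bar>p2 - n\<bar> + \<bar>p3 - n\<bar> \<le> M*h2" using e2 by (simp add: n_def h2_def)
  have nm: "\<bar>n - m\<bar> \<le> M*H" using mp np distrib_left[of M h1 h2] unfolding H_def by arith
  have qm: "q - m = h2*(n-m)/H" "q - n = h1*(m-n)/H" using Hq Hp by (simp_all add: field_simps H_def)
  have qm': "\<bar>q - m\<bar> \<le> M*h2"
  proof -
    have "\<bar>q - m\<bar> = h2*\<bar>n-m\<bar>/H" unfolding qm using h2p Hp by (simp add: abs_mult abs_divide)
    also have "\<dots> \<le> h2*(M*H)/H" by (intro divide_right_mono mult_left_mono nm) (use h2p Hp in auto)
    finally show ?thesis using Hp by (simp add: mult.commute)
  qed
  have qn': "\<bar>q - n\<bar> \<le> M*h1"
  proof -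
    have "\<bar>q - n\<bar> = h1*\<bar>n-m\<bar>/H" unfolding qm using h1p Hp by (simp add: abs_mult abs_divide abs_minus_commute)
    also have "\<dots> \<le> h1*(M*H)/H" by (intro divide_right_mono mult_left_mono nm) (use h1p Hp in auto)
    finally show ?thesis using Hp by (simp add: mult.commute)
  qed
  have T1b: "\<bar>T1\<bar> \<le> 2*M^2"
  proof -
    have a: "\<bar>p1 - p2\<bar> \<le> M*h1" using mp by arith
    have b: "\<bar>p2 - q\<bar> + \<bar>p1 - m\<bar> \<le> M*H" using mp qm' distrib_left[of M h1 h2] unfolding H_def by arith
    have "\<bar>T1\<bar> = \<bar>gg p1 m q - gg p2 m q\<bar>/(h1*H)" using h1p Hp by (simp add: T1_def abs_divide)
    also have "\<dots> \<le> 2*\<bar>p1-p2\<bar>*(\<bar>p2 - q\<bar> + \<bar>p1 - m\<bar>)/(h1*H)"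
      by (intro divide_right_mono gg_diff_bound) (use h1p Hp in auto)
    also have "\<dots> \<le> 2*(M*h1)*(M*H)/(h1*H)"
      by (intro divide_right_mono mult_mono mult_left_mono a b) (use h1p Hp M0 in auto)
    also have "\<dots> = 2*M^2" using h1p Hp by (simp add: power2_eq_square field_simps)
    finally show ?thesis .
  qed
  have T3b: "\<bar>T3\<bar> \<le> 2*M^2"
  proof -
    have a: "\<bar>p3 - p2\<bar> \<le> M*h2" using np by arith
    have b: "\<bar>p2 - n\<bar> + \<bar>p3 - q\<bar> \<le> M*H" using np qn' distrib_left[of M h1 h2] unfolding H_def by arith
    have "\<bar>T3\<bar> = \<bar>gg p3 q n - gg p2 q n\<bar>/(H*h2)" using h2p Hp by (simp add: T3_def abs_divide)
    also have "\<dots> \<le> 2*\<bar>p3-p2\<bar>*(\<bar>p2 - n\<bar> + \<bar>p3 - q\<bar>)/(H*h2)"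
      by (intro divide_right_mono gg_diff_bound) (use h2p Hp in auto)
    also have "\<dots> \<le> 2*(M*h2)*(M*H)/(H*h2)"
      by (intro divide_right_mono mult_mono mult_left_mono a b) (use h2p Hp M0 in auto)
    also have "\<dots> = 2*M^2" using h2p Hp by (simp add: power2_eq_square field_simps)
    finally show ?thesis .
  qed
  have Fe: "F = 2*(n-m)^2/(H^2*(1+m^2)*(1+q^2)*(1+n^2))"
    unfolding F_def using EE_id[OF h1p h2p, of q m n] Hq by (simp add: H_def mult.commute)
  have F0: "F \<ge> 0" unfolding Fe using pos1[of m] pos1[of q] pos1[of n] by simp
  have F1: "F \<le> 2*M^2"
  proof -
    have D1: "H^2 \<le> H^2*(1+m^2)*(1+q^2)*(1+n^2)"
    proof -
      have a: "1*1 \<le> (1+m^2)*(1+q^2)" by (rule mult_mono) auto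
      have b: "1*1 \<le> ((1+m^2)*(1+q^2))*(1+n^2)" by (rule mult_mono) (use a in auto)
      have "H^2*1 \<le> H^2*(((1+m^2)*(1+q^2))*(1+n^2))" by (rule mult_left_mono) (use b in auto)
      then show ?thesis by (simp only: mult_1_right mult.assoc)
    qed
    have "F \<le> 2*(n-m)^2/H^2" unfolding Fe
      by (intro divide_left_mono D1) (use Hp pos1[of m] pos1[of q] pos1[of n] in auto)
    also have "\<dots> \<le> 2*(M*H)^2/H^2"
    proof -
      have "\<bar>n-m\<bar>^2 \<le> (M*H)^2" by (rule power_mono[OF nm]) simp
      then have "(n-m)^2 \<le> (M*H)^2" by (simp only: power2_abs)
      then show ?thesis by (intro divide_right_mono) auto
    qed
    also have "\<dots> = 2*M^2" using Hp by (simp add: power_mult_distrib)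
    finally show ?thesis .
  qed
  show ?thesis unfolding P1 P2 P3 S using F0 F1 T1b T3b by (simp add: abs_le_iff)
qed


lemma ImK_eq: "Im (KGamma A (Complex x (A x)) (Complex y (A y))) = imk (deriv A x) (x - y) (A x - A y)"
proof -
  define r where "r = sqrt (1 + (deriv A x)^2)"
  define p where "p = deriv A x"
  define U where "U = x - y"
  define V where "V = A x - A y"
  have sp: "r > 0" unfolding r_def by (simp add: add_pos_nonneg)
  have "Im (KGamma A (Complex x (A x)) (Complex y (A y))) =
     (- (r*U) - p*(r*V))/((r*U)^2 + (r*V)^2)"
    unfolding KGamma_def Let_def sfun_def r_def[symmetric] p_def[symmetric] U_def[symmetric] V_def[symmetric]
    by (simp add: Im_divide r_def p_def U_def V_def)
  also have "\<dots> = (r * (-(U + p*V))) / (r * (r*(U^2+V^2)))"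
    by (simp add: algebra_simps power2_eq_square)
  also have "\<dots> = imk p U V" unfolding imk_def using sp by (simp add: r_def p_def)
  finally show ?thesis by (simp add: p_def U_def V_def)
qed

lemma Ssym_expand: "Ssym K z = 2*(K (z 1) (z 2) * K (z 1) (z 3) + K (z 2) (z 1) * K (z 2) (z 3) + K (z 3) (z 1) * K (z 3) (z 2))"
proof -
  have e: "{1,2,3::nat} = insert 1 (insert 2 (insert 3 {}))" by simp
  have "Ssym K z = (\<Sum>b\<in>{1,2,3::nat}. \<Sum>c\<in>{2,3::nat}. \<Sum>d\<in>{3::nat}. 
     (\<lambda>\<sigma>. K (z (\<sigma> 1)) (z (\<sigma> 2)) * K (z (\<sigma> 1)) (z (\<sigma> 3))) (Transposition.transpose 1 b \<circ> (Transposition.transpose 2 c \<circ> (Transposition.transpose 3 d \<circ> id))))"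
    unfolding Ssym_def
    apply (subst sum_over_permutations_insert[of "{2,3}" 1, simplified insert_commute], simp, simp)
    apply (subst sum_over_permutations_insert[of "{3}" 2], simp, simp)
    apply (subst sum_over_permutations_insert[of "{}" 3], simp, simp)
    apply simp
    done
  then show ?thesis by (simp add: Transposition.transpose_def algebra_simps)
qed

definition Sx :: "(nat\<Rightarrow>real) \<Rightarrow> (nat\<Rightarrow>real) \<Rightarrow> (nat\<Rightarrow>real) \<Rightarrow> nat\<Rightarrow>nat\<Rightarrow>nat\<Rightarrow>real" where
 "Sx X Y P i j k = 2*(imk (P i) (X i - X j) (Y i - Y j) * imk (P i) (X i - X k) (Y i - Y k)
    + imk (P j) (X j - X i) (Y j - Y i) * imk (P j) (X j - X k) (Y j - Y k)
    + imk (P k) (X k - X i) (Y k - Y i) * imk (P k) (X k - X j) (Y k - Y j))"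

lemma Sx_sym1: "Sx X Y P i j k = Sx X Y P j i k" unfolding Sx_def by (simp add: ac_simps)
lemma Sx_sym2: "Sx X Y P i j k = Sx X Y P i k j" unfolding Sx_def by (simp add: ac_simps)

definition HYP :: "(nat\<Rightarrow>real) \<Rightarrow> (nat\<Rightarrow>real) \<Rightarrow> (nat\<Rightarrow>real) \<Rightarrow> real \<Rightarrow> nat set \<Rightarrow> bool" where
  "HYP X Y P M I = (\<forall>u\<in>I. \<forall>v\<in>I. X u < X v \<longrightarrow>
     \<bar>P u - (Y v - Y u)/(X v - X u)\<bar> + \<bar>P v - (Y v - Y u)/(X v - X u)\<bar> \<le> M*(X v - X u))"

lemma Sx_sorted:
  assumes "X i < X j" "X j < X k" "M \<ge> 0" "HYP X Y P M {i,j,k}"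
  shows "\<bar>Sx X Y P i j k\<bar> \<le> 6*M^2"
  unfolding Sx_def
  by (rule core) (use assms in \<open>auto simp: HYP_def\<close>)

lemma Sx_any:
  assumes "X i \<noteq> X j" "X j \<noteq> X k" "X i \<noteq> X k" "M \<ge> 0" "HYP X Y P M {i,j,k}"
  shows "\<bar>Sx X Y P i j k\<bar> \<le> 6*M^2"
proof -
  have s: "{i,j,k} = {j,i,k}" "{i,j,k} = {i,k,j}" "{i,j,k} = {k,i,j}" "{i,j,k} = {j,k,i}" "{i,j,k} = {k,j,i}" by auto
  have e1: "Sx X Y P i j k = Sx X Y P j i k" by (rule Sx_sym1)
  have e2: "Sx X Y P i j k = Sx X Y P i k j" by (rule Sx_sym2)
  have e3: "Sx X Y P i j k = Sx X Y P k i j" using e2 Sx_sym1[of X Y P i k j] by (rule trans)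
  have e4: "Sx X Y P i j k = Sx X Y P j k i" using e1 Sx_sym2[of X Y P j i k] by (rule trans)
  have e5: "Sx X Y P i j k = Sx X Y P k j i" using e3 Sx_sym2[of X Y P k i j] by (rule trans)
  consider "X i < X j" "X j < X k" | "X j < X i" "X i < X k" | "X i < X k" "X k < X j"
    | "X k < X i" "X i < X j" | "X j < X k" "X k < X i" | "X k < X j" "X j < X i"
  proof -
    have o1: "X i < X j \<or> X j < X i" using assms(1) by linarith
    have o2: "X j < X k \<or> X k < X j" using assms(2) by linarith
    have o3: "X i < X k \<or> X k < X i" using assms(3) by linarith
    from o1 o2 o3 show ?thesis
      using that by (elim disjE) (linarith | blast)+
  qed
  then show ?thesis
  proof cases
    case 1
    have "HYP X Y P M {i,j,k}" using assms(5) .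
    then have "\<bar>Sx X Y P i j k\<bar> \<le> 6*M^2" using Sx_sorted[of X i j k M Y P] 1 assms(4) by blast
    then show ?thesis .
  next
    case 2
    have "HYP X Y P M {j,i,k}" using assms(5) unfolding s(1) .
    then have "\<bar>Sx X Y P j i k\<bar> \<le> 6*M^2" using Sx_sorted[of X j i k M Y P] 2 assms(4) by blast
    then show ?thesis by (simp only: e1)
  next
    case 3
    have "HYP X Y P M {i,k,j}" using assms(5) unfolding s(2) .
    then have "\<bar>Sx X Y P i k j\<bar> \<le> 6*M^2" using Sx_sorted[of X i k j M Y P] 3 assms(4) by blast
    then show ?thesis by (simp only: e2)
  next
    case 4
    have "HYP X Y P M {k,i,j}" using assms(5) unfolding s(3) .
    then have "\<bar>Sx X Y P k i j\<bar> \<le> 6*M^2" using Sx_sorted[of X k i j M Y P] 4 assms(4) by blast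
    then show ?thesis by (simp only: e3)
  next
    case 5
    have "HYP X Y P M {j,k,i}" using assms(5) unfolding s(4) .
    then have "\<bar>Sx X Y P j k i\<bar> \<le> 6*M^2" using Sx_sorted[of X j k i M Y P] 5 assms(4) by blast
    then show ?thesis by (simp only: e4)
  next
    case 6
    have "HYP X Y P M {k,j,i}" using assms(5) unfolding s(5) .
    then have "\<bar>Sx X Y P k j i\<bar> \<le> 6*M^2" using Sx_sorted[of X k j i M Y P] 6 assms(4) by blast
    then show ?thesis by (simp only: e5)
  qed
qed

lemma mvt_bound:
  fixes A :: "real \<Rightarrow> real"
  assumes J_int: "is_interval J"
    and A_diff: "\<forall>x\<in>J. A differentiable (at x)"
    and A_lip: "\<forall>x\<in>J. \<forall>y\<in>J. \<bar>deriv A x - deriv A y\<bar> \<le> M * \<bar>x - y\<bar>"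
    and uv: "u \<in> J" "v \<in> J" "u < v"
  shows "\<bar>deriv A u - (A v - A u)/(v - u)\<bar> + \<bar>deriv A v - (A v - A u)/(v - u)\<bar> \<le> M*(v - u)"
proof -
  have sub: "t \<in> J" if "u \<le> t" "t \<le> v" for t
    using J_int uv that unfolding is_interval_1 by blast
  have "\<And>t. u \<le> t \<Longrightarrow> t \<le> v \<Longrightarrow> DERIV A t :> deriv A t"
    using sub A_diff DERIV_deriv_iff_real_differentiable by blast
  from MVT2[OF uv(3) this] obtain \<xi> where xi: "u < \<xi>" "\<xi> < v" "A v - A u = (v - u) * deriv A \<xi>"
    by blast
  have sl: "(A v - A u)/(v - u) = deriv A \<xi>" using xi uv by simp
  have xJ: "\<xi> \<in> J" using sub xi by auto
  have "\<bar>deriv A u - deriv A \<xi>\<bar> \<le> M*\<bar>u - \<xi>\<bar>" "\<bar>deriv A v - deriv A \<xi>\<bar> \<le> M*\<bar>v - \<xi>\<bar>"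
    using A_lip uv xJ by auto
  moreover have "\<bar>u - \<xi>\<bar> = \<xi> - u" "\<bar>v - \<xi>\<bar> = v - \<xi>" using xi by auto
  ultimately show ?thesis unfolding sl by (simp add: algebra_simps)
qed

theorem corollary1p6:
  fixes J :: "real set" and A :: "real \<Rightarrow> real" and M :: real and z :: "nat \<Rightarrow> complex"
  assumes J_open: "open J" and J_int: "is_interval J"
    and A_diff: "\<forall>x\<in>J. A differentiable (at x)"
    and M_pos: "M > 0"
    and A_lip: "\<forall>x\<in>J. \<forall>y\<in>J. \<bar>deriv A x - deriv A y\<bar> \<le> M * \<bar>x - y\<bar>"
    and z_on: "\<forall>i\<in>{1,2,3}. z i \<in> graph_curve A J"
    and z_dist: "inj_on z {1,2,3}"
  shows "\<bar>Ssym (\<lambda>w v. Im (KGamma A w v)) z\<bar> \<le> (8 + 3/2) * M\<^sup>2"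
proof -
  define X where "X i = Re (z i)" for i
  define Y where "Y i = A (X i)" for i
  define P where "P i = deriv A (X i)" for i
  have zi: "z i = Complex (X i) (Y i) \<and> X i \<in> J" if "i \<in> {1,2,3}" for i
  proof -
    have "z i \<in> graph_curve A J" using z_on that by (rule bspec)
    then obtain x where "z i = Complex x (A x)" "x \<in> J" unfolding graph_curve_def by auto
    then show ?thesis by (simp add: X_def Y_def)
  qed
  have dist: "X i \<noteq> X j" if "i \<in> {1,2,3}" "j \<in> {1,2,3}" "i \<noteq> j" for i j
  proof
    assume "X i = X j"
    then have "z i = z j" using zi[OF that(1)] zi[OF that(2)] by (simp add: Y_def)
    then show False using z_dist that by (meson inj_onD)
  qed
  have K: "Im (KGamma A (z i) (z j)) = imk (P i) (X i - X j) (Y i - Y j)"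
    if "i \<in> {1,2,3}" "j \<in> {1,2,3}" for i j
    using zi[OF that(1)] zi[OF that(2)] ImK_eq[of A "X i" "X j"] by (simp add: Y_def P_def)
  have S: "Ssym (\<lambda>w v. Im (KGamma A w v)) z = Sx X Y P 1 2 3"
    unfolding Ssym_expand Sx_def by (simp add: K)
  have H: "HYP X Y P M {1,2,3}"
    unfolding HYP_def
  proof (intro ballI impI)
    fix u v :: nat assume uv: "u \<in> {1,2,3}" "v \<in> {1,2,3}" "X u < X v"
    show "\<bar>P u - (Y v - Y u)/(X v - X u)\<bar> + \<bar>P v - (Y v - Y u)/(X v - X u)\<bar> \<le> M*(X v - X u)"
      unfolding P_def Y_def
      by (rule mvt_bound[OF J_int A_diff A_lip]) (use zi uv in auto)
  qed
  have "\<bar>Sx X Y P 1 2 3\<bar> \<le> 6*M^2"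
    by (rule Sx_any) (use dist M_pos H in auto)
  moreover have "6*M^2 \<le> (8 + 3/2) * M\<^sup>2" by simp
  ultimately show ?thesis unfolding S by linarith
qed

end
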